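(* For every integer $g\ge 0$ let $\mathfrak{A}_g:=16^g\sum_{i=0}^{g}(-2)^i\binom{g}{i}C_{2g-i}$, where $C_n=\frac{1}{n+1}\binom{2n}{n}$ is the $n$-th Catalan number. Then, as formal power series in $w$, $$\sum_{g\ge 0}\mathfrak{A}_g\,w^{2g+1}=\frac{2w}{\sqrt{1+64w^2+16w\sqrt{16w^2+1}}+\sqrt{1+64w^2-16w\sqrt{16w^2+1}}}.$$
   Context: For $g\ge 3$, the number $\mathfrak{A}_g$ equals the number of odd covers $f:C\to\mathbb{P}^1$ of degree $2g+1$ (finite maps with $3g$ branch points and local monodromy a $3$-cycle at each branch point) from a general curve $C$ of genus $g$; these are called the alternating Catalan numbers. *)

theory Defs
  imports Complex_Main "HOL-Computational_Algebra.Formal_Power_Series"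
begin

definition catalan :: "nat \<Rightarrow> real" where
  "catalan n = real ((2*n) choose n) / real (n + 1)"

definition altCatalan :: "nat \<Rightarrow> real" where
  "altCatalan g = 16 ^ g * (\<Sum>i=0..g. (-2) ^ i * real (g choose i) * catalan (2*g - i))"

text \<open>Square root of a formal power series with positive constant term:
  the unique square root whose constant term is the positive real square root.\<close>
definition fps_sqrt :: "real fps \<Rightarrow> real fps" where
  "fps_sqrt a = fps_radical (\<lambda>k x. root k x) 2 a"

definition altCatalan_gf :: "real fps" where
  "altCatalan_gf = Abs_fps (\<lambda>n. if odd n then altCatalan ((n - 1) div 2) else 0)"

end

theory Submission
  imports Defs
begin

unbundle fps_syntax


lemma fps_sqrt_0: "fps_sqrt a $ 0 = root 2 (a $ 0)"
  unfolding fps_sqrt_def by simp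

lemma fps_sqrt_sq:
  assumes "a $ 0 > 0"
  shows "fps_sqrt a ^ 2 = a"
proof -
  have h: "root 2 (a$0) ^ 2 = a$0"
    using assms by (simp add: real_root_pow_pos2)
  have "(root (Suc (Suc 0)) (a$0)) ^ Suc (Suc 0) = a$0"
    using h unfolding numeral_2_eq_2 .
  then have "(fps_radical (\<lambda>k x. root k x) (Suc (Suc 0)) a) ^ (Suc (Suc 0)) = a"
    using power_radical[of a "\<lambda>k x. root k x" "Suc 0"] assms by simp
  then show ?thesis unfolding fps_sqrt_def numeral_2_eq_2 .
qed

lemma sq_unique:
  fixes f g :: "real fps"
  assumes "f^2 = g^2" "f$0 = g$0" "f$0 \<noteq> 0"
  shows "f = g"
proof -
  have "(f - g) * (f + g) = 0" using assms(1) by (simp add: algebra_simps power2_eq_square)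
  moreover have "f + g \<noteq> 0"
  proof
    assume "f + g = 0"
    then have "(f+g)$0 = 0" by simp
    with assms show False by simp
  qed
  ultimately show ?thesis by simp
qed

lemma mult_trunc:
  fixes f g h :: "real fps"
  assumes "\<forall>m\<le>n. f$m = g$m"
  shows "(h*f)$n = (h*g)$n"
  unfolding fps_mult_nth using assms by (intro sum.cong) auto

lemma compose_trunc:
  fixes f a :: "real fps"
  assumes a0: "a$0 = 0" and mN: "m \<le> N"
  shows "(f oo a)$m = (\<Sum>k\<le>N. fps_const (f$k) * a^k)$m"
proof -
  have "(\<Sum>k\<le>N. fps_const (f$k) * a^k)$m = (\<Sum>k\<le>N. f$k * (a^k)$m)"
    by (simp add: fps_sum_nth)
  also have "\<dots> = (\<Sum>k\<in>{0..m}. f$k * (a^k)$m)"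
  proof (rule sum.mono_neutral_right)
    show "finite {..N}" by simp
    show "{0..m} \<subseteq> {..N}" using mN by auto
    show "\<forall>i\<in>{..N} - {0..m}. f $ i * (a ^ i) $ m = 0"
      using startsby_zero_power_prefix[OF a0] by auto
  qed
  finally show ?thesis by (simp add: fps_compose_nth)
qed

lemma catalan_Suc: "catalan (Suc n) = catalan n * (2*(2*real n+1)) / (real n+2)"
proof -
  have e1: "Suc n * (Suc (2*n+1) choose Suc n) = Suc (2*n+1) * ((2*n+1) choose n)"
    by (rule Suc_times_binomial)
  have e2: "(2*n+1) choose n = (2*n+1) choose Suc n"
    using binomial_symmetric[of n "2*n+1"] by (simp add: Suc_diff_le)
  have e3: "Suc n * (Suc (2*n) choose Suc n) = Suc (2*n) * ((2*n) choose n)"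
    by (rule Suc_times_binomial)
  have e4: "(Suc (2*n+1) choose Suc n) = 2 * ((2*n+1) choose Suc n)"
    using e1 e2 by simp
  have e5: "Suc n * (Suc (2*n+1) choose Suc n) = 2 * (Suc (2*n) * ((2*n) choose n))"
  proof -
    have "Suc n * (Suc (2*n+1) choose Suc n) = 2 * (Suc n * (Suc (2*n) choose Suc n))"
      using e4 by simp
    also have "\<dots> = 2 * (Suc (2*n) * ((2*n) choose n))" using e3 by simp
    finally show ?thesis .
  qed
  define XX where "XX = (Suc (2*n+1) choose Suc n)"
  define ZZ where "ZZ = ((2*n) choose n)"
  have e6: "(real n + 1) * real XX = 2 * (2 * real n + 1) * real ZZ"
  proof -
    have e5': "Suc n * XX = 2 * (Suc (2*n) * ZZ)" using e5 unfolding XX_def ZZ_def .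
    have "real (Suc n * XX) = real (2 * (Suc (2*n) * ZZ))" by (simp only: e5')
    then have "(real n + 1) * real XX = 2 * ((2 * real n + 1) * real ZZ)" by (simp add: algebra_simps)
    then show ?thesis by simp
  qed
  have eq: "2 * Suc n = Suc (2*n+1)" by simp
  note e7 = e6
  have xx: "real XX = 2*(2*real n+1)*real ZZ/(real n+1)"
    by (subst e7[symmetric]) simp
  show ?thesis unfolding catalan_def eq XX_def[symmetric] ZZ_def[symmetric] xx
    by (simp add: field_simps)
qed

lemma half_binom: "((1/2::real) gchoose (Suc n)) * (-4)^(Suc n) = -2 * catalan n"
proof (induction n)
  case 0
  then show ?case by (simp add: catalan_def)
next
  case (Suc n)
  define G1 where "G1 = ((1/2::real) gchoose Suc n)"
  define G2 where "G2 = ((1/2::real) gchoose Suc (Suc n))"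
  define P where "P = ((-4::real)^(Suc n))"
  have IH: "G1 * P = -2 * catalan n" using Suc.IH unfolding G1_def P_def .
  have r: "real (Suc (Suc n)) * G2 = (1/2 - real (Suc n)) * G1"
    unfolding G1_def G2_def
    using gbinomial_mult_1[of "1/2::real" "Suc n"] by (simp add: algebra_simps)
  have G2e: "G2 = (1/2 - real (Suc n)) * G1 / real (Suc (Suc n))"
    using r by (simp add: eq_divide_eq mult.commute)
  have "G2 * (-4)^(Suc (Suc n)) = G2 * (-4) * P"
    unfolding P_def by simp
  also have "\<dots> = (1/2 - real (Suc n)) * (-4) / real (Suc (Suc n)) * (G1 * P)"
    unfolding G2e by (simp add: field_simps)
  also have "\<dots> = -2 * catalan (Suc n)"
    unfolding IH catalan_Suc by (simp add: field_simps)
  finally show ?case unfolding G2_def .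
qed

lemma fps_const_neg_mult: "fps_const (- c) * f = - (fps_const c * (f :: real fps))"
  by (metis fps_const_neg minus_mult_left)

lemma fps_const_mult_assoc: "fps_const c * (fps_const d * (f :: real fps)) = fps_const (c * d) * f"
  by (simp add: mult.assoc[symmetric])

definition cfps :: "real fps" where "cfps = Abs_fps catalan"
definition Ufps :: "real fps" where "Ufps = 1 - fps_const 2 * fps_X * cfps"

lemma Ufps_binom: "Ufps = fps_binomial (1/2) oo (fps_const (-4) * fps_X)"
proof (rule fps_ext)
  fix n
  show "Ufps $ n = (fps_binomial (1/2) oo (fps_const (-4) * fps_X)) $ n"
  proof (cases n)
    case 0
    then show ?thesis by (simp add: Ufps_def fps_compose_linear)
  next
    case (Suc m)
    have "Ufps $ n = - 2 * catalan m"
      unfolding Ufps_def Suc by (simp add: cfps_def mult.assoc)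
    also have "\<dots> = ((1/2::real) gchoose (Suc m)) * (-4)^(Suc m)"
      by (simp only: half_binom)
    finally show ?thesis unfolding Suc fps_compose_linear by (simp add: mult.commute)
  qed
qed

lemma Ufps_sq: "Ufps ^ 2 = 1 - fps_const 4 * fps_X"
proof -
  let ?L = "fps_const (-4::real) * fps_X"
  have L0: "?L $ 0 = 0" by simp
  have "Ufps ^ 2 = (fps_binomial (1/2) ^ 2) oo ?L"
    unfolding Ufps_binom using fps_compose_power[OF L0] by simp
  also have "fps_binomial (1/2::real) ^ 2 = fps_binomial 1"
    using fps_binomial_add_mult[of "1/2::real" "1/2"] by (simp add: power2_eq_square)
  also have "\<dots> = 1 + fps_X" by (rule fps_binomial_1)
  also have "(1 + fps_X) oo ?L = 1 - fps_const 4 * fps_X"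
    using L0 by (simp add: fps_compose_add_distrib fps_const_neg_mult)
  finally show ?thesis .
qed

lemma comp_key:
  fixes al S :: "real fps"
  assumes al0: "al $ 0 = 0" and S2: "S ^ 2 = 1 + fps_const 2 * al" and S0: "S $ 0 = 1"
  shows "al * (cfps oo (fps_const (-1/2) * al)) = S - 1"
proof -
  define a where "a = fps_const (-1/2) * al"
  have a0: "a $ 0 = 0" unfolding a_def using al0 by simp
  have "(Ufps oo a) ^ 2 = Ufps ^ 2 oo a" using fps_compose_power[OF a0] by simp
  also have "\<dots> = 1 - fps_const 4 * a"
    unfolding Ufps_sq using a0
    by (simp add: fps_compose_sub_distrib fps_compose_mult_distrib)
  also have "\<dots> = 1 + fps_const 2 * al"
    unfolding a_def fps_const_mult_assoc by (simp add: fps_const_neg_mult)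
  finally have sq: "(Ufps oo a) ^ 2 = S ^ 2" using S2 by simp
  have c0: "(Ufps oo a) $ 0 = S $ 0" using S0 by (simp add: Ufps_def)
  have "S = Ufps oo a"
    using sq_unique[OF sq[symmetric]] c0 S0 by simp
  also have "\<dots> = 1 - fps_const 2 * a * (cfps oo a)"
    unfolding Ufps_def using a0
    by (simp add: fps_compose_sub_distrib fps_compose_mult_distrib)
  also have "\<dots> = 1 + al * (cfps oo a)"
    unfolding a_def mult.assoc fps_const_mult_assoc by (simp add: fps_const_neg_mult)
  finally show ?thesis unfolding a_def by simp
qed

lemma trunc_key:
  fixes al :: "real fps"
  assumes al0: "al $ 0 = 0"
  shows "(al * (cfps oo (fps_const (-1/2) * al))) $ n
       = (\<Sum>k\<le>n. fps_const (catalan k * (-1/2)^k) * al ^ Suc k) $ n"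
proof -
  define a where "a = fps_const (-1/2) * al"
  have a0: "a $ 0 = 0" unfolding a_def using al0 by simp
  have "(al * (cfps oo a)) $ n = (al * (\<Sum>k\<le>n. fps_const (cfps $ k) * a ^ k)) $ n"
    using compose_trunc[OF a0] by (intro mult_trunc) auto
  also have "al * (\<Sum>k\<le>n. fps_const (cfps $ k) * a ^ k)
        = (\<Sum>k\<le>n. fps_const (catalan k * (-1/2)^k) * al ^ Suc k)"
    unfolding sum_distrib_left
  proof (rule sum.cong)
    fix k
    show "al * (fps_const (cfps $ k) * a ^ k) = fps_const (catalan k * (- 1 / 2) ^ k) * al ^ Suc k"
      unfolding a_def power_mult_distrib fps_const_power by (simp add: cfps_def algebra_simps)
  qed simp
  finally show ?thesis unfolding a_def .
qed



fun hh :: "nat \<Rightarrow> real fps" where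
  "hh 0 = 1"
| "hh (Suc 0) = fps_const 64 * fps_X ^ 2"
| "hh (Suc (Suc k)) = fps_const 64 * fps_X ^ 2 * (hh (Suc k) + hh k)"

lemma X2_nth: "(fps_const c * fps_X ^ 2 * f) $ n = (if n < 2 then 0 else c * f $ (n - 2))"
  by (simp add: mult.assoc fps_X_power_mult_nth)

lemma hh_odd: "hh k $ (2*j+1) = 0"
proof (induction k arbitrary: j rule: hh.induct)
  case 1
  then show ?case by simp
next
  case 2
  then show ?case by (simp add: fps_X_power_nth) 
next
  case (3 k)
  show ?case
  proof (cases j)
    case 0
    then show ?thesis by (simp only: hh.simps X2_nth) simp
  next
    case (Suc j')
    have e: "2 * j + 1 - 2 = 2 * j' + 1" using Suc by simp
    show ?thesis unfolding hh.simps X2_nth e using 3 Suc by simp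
  qed
qed

lemma hh_even: "hh k $ (2*j) = (if j \<le> k then real (j choose (k - j)) * 64 ^ j else 0)"
proof (induction k arbitrary: j rule: hh.induct)
  case 1
  then show ?case by simp
next
  case 2
  then show ?case by (cases j) (auto simp add: fps_X_power_nth)
next
  case (3 k)
  show ?case
  proof (cases j)
    case 0
    then show ?thesis by (simp only: hh.simps X2_nth) simp
  next
    case (Suc j')
    have e: "2 * j - 2 = 2 * j'" using Suc by simp
    have "hh (Suc (Suc k)) $ (2*j) = 64 * (hh (Suc k) $ (2*j') + hh k $ (2*j'))"
      unfolding hh.simps X2_nth e using Suc by simp
    also have "\<dots> = 64 * ((if j' \<le> Suc k then real (j' choose (Suc k - j')) * 64 ^ j' else 0)
                         + (if j' \<le> k then real (j' choose (k - j')) * 64 ^ j' else 0))"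
      using 3 by simp
    also have "\<dots> = (if j \<le> Suc (Suc k) then real (j choose (Suc (Suc k) - j)) * 64 ^ j else 0)"
    proof (cases "j' \<le> k")
      case True
      then have d: "Suc k - j' = Suc (k - j')" by simp
      show ?thesis using True Suc by (simp add: d algebra_simps)
    next
      case False
      then show ?thesis using Suc by (cases "j' = Suc k") auto
    qed
    finally show ?thesis .
  qed
qed

definition Efps :: "real fps" where
  "Efps = Abs_fps (\<lambda>m. if even m then altCatalan (m div 2) else 0)"

lemma pow_identity:
  assumes "i \<le> g"
  shows "(-1/2::real) ^ (2*g - i) * 64 ^ g = 16 ^ g * (-2) ^ i"
proof -
  obtain j where g: "g = i + j" using assms le_Suc_ex by blast
  have e: "2*g - i = i + 2*j" using g by simp
  have "(-1/2::real) ^ (i + 2*j) * 64 ^ (i+j) = ((-1/2)^i * 64^i) * (((-1/2)^2)^j * 64^j)"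
    by (simp add: power_add power_mult)
  also have "\<dots> = ((-1/2) * 64) ^ i * (((-1/2)^2) * 64) ^ j"
    by (simp only: power_mult_distrib)
  also have "\<dots> = (16 * (-2)) ^ i * 16 ^ j"
  proof -
    have q1: "(-1/2::real) * 64 = 16 * (-2)" by simp
    have q2: "(-1/2::real)^2 * 64 = 16" by (simp add: power2_eq_square)
    show ?thesis by (simp only: q1 q2)
  qed
  also have "\<dots> = 16 ^ (i+j) * (-2::real) ^ i"
    by (simp only: power_mult_distrib power_add) (simp add: algebra_simps)
  moreover have e': "2*(i+j) - i = i + 2*j" by simp
  ultimately show ?thesis unfolding g e' by simp
qed

lemma En_E:
  assumes "m \<le> N"
  shows "(\<Sum>k\<le>N. fps_const (catalan k * (-1/2)^k) * hh k) $ m = Efps $ m"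
proof (cases "even m")
  case False
  then obtain j where m: "m = 2*j+1" by (metis oddE)
  have ho: "hh k $ Suc (2*j) = 0" for k using hh_odd[of k j] by simp
  show ?thesis unfolding m by (simp add: fps_sum_nth ho Efps_def)
next
  case True
  then obtain g where m: "m = 2*g" by blast
  let ?phi = "\<lambda>k. catalan k * (-1/2)^k * (real (g choose (k - g)) * 64 ^ g)"
  have "(\<Sum>k\<le>N. fps_const (catalan k * (-1/2)^k) * hh k) $ m
        = (\<Sum>k\<le>N. catalan k * (-1/2)^k * (if g \<le> k then real (g choose (k - g)) * 64 ^ g else 0))"
    unfolding m by (simp add: fps_sum_nth hh_even)
  also have "\<dots> = (\<Sum>k\<in>{g..2*g}. ?phi k)"
  proof (rule sum.mono_neutral_cong_right)
    show "finite {..N}" by simp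
    show "{g..2*g} \<subseteq> {..N}" using assms m by auto
    show "\<forall>i\<in>{..N} - {g..2 * g}. catalan i * (- 1 / 2) ^ i * (if g \<le> i then real (g choose (i - g)) * 64 ^ g else 0) = 0"
      by auto
    show "\<And>x. x \<in> {g..2 * g} \<Longrightarrow> catalan x * (- 1 / 2) ^ x * (if g \<le> x then real (g choose (x - g)) * 64 ^ g else 0) = ?phi x"
      by auto
  qed
  also have "\<dots> = (\<Sum>i\<in>{0..g}. ?phi (2*g - i))"
    by (rule sum.reindex_bij_witness[where i="\<lambda>k. 2*g - k" and j="\<lambda>i. 2*g - i"]) auto
  also have "\<dots> = (\<Sum>i\<in>{0..g}. 16 ^ g * ((-2) ^ i * real (g choose i) * catalan (2*g - i)))"
  proof (rule sum.cong)
    fix i assume i: "i \<in> {0..g}"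
    then have ig: "i \<le> g" by simp
    have b: "g choose (2*g - i - g) = g choose i"
      using ig binomial_symmetric[of i g] by (simp add: diff_diff_left)
    show "?phi (2*g - i) = 16 ^ g * ((-2) ^ i * real (g choose i) * catalan (2*g - i))"
      unfolding b using pow_identity[OF ig]
      by (simp add: algebra_simps)
  qed simp
  also have "\<dots> = altCatalan g"
    unfolding altCatalan_def by (simp add: sum_distrib_left)
  finally show ?thesis unfolding m by (simp add: Efps_def)
qed



definition "sW = fps_sqrt (16 * fps_X ^ 2 + 1)"
definition "alp = fps_const 32 * fps_X ^ 2 + fps_const 8 * fps_X * sW"
definition "bet = fps_const 32 * fps_X ^ 2 - fps_const 8 * fps_X * sW"
definition "S1 = fps_sqrt (1 + 64 * fps_X ^ 2 + 16 * fps_X * sW)"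
definition "S2 = fps_sqrt (1 + 64 * fps_X ^ 2 - 16 * fps_X * sW)"

lemma sW0: "sW $ 0 = 1" unfolding sW_def fps_sqrt_0 by simp
lemma sW2: "sW ^ 2 = 16 * fps_X ^ 2 + 1" unfolding sW_def by (rule fps_sqrt_sq) simp
lemma S10: "S1 $ 0 = 1" unfolding S1_def fps_sqrt_0 by simp
lemma S20: "S2 $ 0 = 1" unfolding S2_def fps_sqrt_0 by simp
lemma S1sq: "S1 ^ 2 = 1 + 64 * fps_X ^ 2 + 16 * fps_X * sW" unfolding S1_def by (rule fps_sqrt_sq) simp
lemma S2sq: "S2 ^ 2 = 1 + 64 * fps_X ^ 2 - 16 * fps_X * sW" unfolding S2_def by (rule fps_sqrt_sq) simp

lemma S1sq': "S1 ^ 2 = 1 + fps_const 2 * alp"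
  unfolding S1sq alp_def by (simp add: numeral_fps_const algebra_simps)
lemma S2sq': "S2 ^ 2 = 1 + fps_const 2 * bet"
  unfolding S2sq bet_def by (simp add: numeral_fps_const algebra_simps)
lemma alp0: "alp $ 0 = 0" unfolding alp_def by simp
lemma bet0: "bet $ 0 = 0" unfolding bet_def by simp

lemma ab_sum: "alp + bet = fps_const 64 * fps_X ^ 2"
  unfolding alp_def bet_def by (simp add: numeral_fps_const algebra_simps flip: distrib_right)

lemma ab_prod: "alp * bet = - (fps_const 64 * fps_X ^ 2)"
proof -
  have "alp * bet = (fps_const 32 * fps_X ^ 2)^2 - (fps_const 8 * fps_X)^2 * sW^2"
    unfolding alp_def bet_def by (simp add: algebra_simps power2_eq_square)
  also have "\<dots> = - (fps_const 64 * fps_X ^ 2)"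
    unfolding sW2 by (simp add: numeral_fps_const algebra_simps power2_eq_square)
  finally show ?thesis .
qed

lemma hh_rel: "(alp - bet) * hh k = alp ^ Suc k - bet ^ Suc k"
proof (induction k rule: hh.induct)
  case 1
  then show ?case by simp
next
  case 2
  then show ?case unfolding hh.simps ab_sum[symmetric] by (simp add: algebra_simps power2_eq_square)
next
  case (3 k)
  have "(alp - bet) * hh (Suc (Suc k))
      = (alp + bet) * ((alp - bet) * hh (Suc k)) + (alp + bet) * ((alp - bet) * hh k)"
    unfolding hh.simps ab_sum[symmetric] by (simp add: algebra_simps)
  also have "\<dots> = (alp + bet) * (alp ^ Suc (Suc k) - bet ^ Suc (Suc k)) - (alp * bet) * (alp ^ Suc k - bet ^ Suc k)"
    unfolding 3 using ab_prod ab_sum by simp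
  also have "\<dots> = alp ^ Suc (Suc (Suc k)) - bet ^ Suc (Suc (Suc k))"
    by (simp add: algebra_simps)
  finally show ?case .
qed

lemma key1: "alp * (cfps oo (fps_const (-1/2) * alp)) = S1 - 1"
  using comp_key[OF alp0 S1sq' S10] .
lemma key2: "bet * (cfps oo (fps_const (-1/2) * bet)) = S2 - 1"
  using comp_key[OF bet0 S2sq' S20] .

lemma main_coeff: "((alp - bet) * Efps) $ n = (S1 - S2) $ n"
proof -
  let ?w = "\<lambda>k. catalan k * (-1/2::real)^k"
  have "(S1 - S2) $ n = (alp * (cfps oo (fps_const (-1/2) * alp))) $ n - (bet * (cfps oo (fps_const (-1/2) * bet))) $ n"
    unfolding key1 key2 by simp
  also have "\<dots> = (\<Sum>k\<le>n. fps_const (?w k) * alp ^ Suc k) $ n - (\<Sum>k\<le>n. fps_const (?w k) * bet ^ Suc k) $ n"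
    unfolding trunc_key[OF alp0] trunc_key[OF bet0] ..
  also have "\<dots> = (\<Sum>k\<le>n. fps_const (?w k) * (alp ^ Suc k - bet ^ Suc k)) $ n"
    by (simp add: fps_sum_nth algebra_simps sum_subtractf)
  also have "\<dots> = ((alp - bet) * (\<Sum>k\<le>n. fps_const (?w k) * hh k)) $ n"
    unfolding hh_rel[symmetric] sum_distrib_left by (simp add: algebra_simps)
  also have "\<dots> = ((alp - bet) * Efps) $ n"
    using En_E by (intro mult_trunc) auto
  finally show ?thesis by simp
qed

lemma main_eq: "(alp - bet) * Efps = S1 - S2"
  using main_coeff by (intro fps_ext) auto

lemma ab_diff: "alp - bet = fps_const 16 * fps_X * sW"
  unfolding alp_def bet_def by (simp add: numeral_fps_const algebra_simps flip: distrib_right)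

lemma gf_X: "altCatalan_gf = fps_X * Efps"
proof (rule fps_ext)
  fix n show "altCatalan_gf $ n = (fps_X * Efps) $ n"
    by (cases n) (auto simp: altCatalan_gf_def Efps_def)
qed

theorem theorem1p2:
  shows "altCatalan_gf =
    2 * fps_X /
      (fps_sqrt (1 + 64 * fps_X ^ 2 + 16 * fps_X * fps_sqrt (16 * fps_X ^ 2 + 1))
     + fps_sqrt (1 + 64 * fps_X ^ 2 - 16 * fps_X * fps_sqrt (16 * fps_X ^ 2 + 1)))"
proof -
  define F where "F = altCatalan_gf"
  define D where "D = S1 + S2"
  have D0: "D $ 0 \<noteq> 0" unfolding D_def using S10 S20 by simp
  have h1: "fps_const 16 * sW * F = S1 - S2"
    unfolding F_def gf_X main_eq[symmetric] ab_diff by (simp add: algebra_simps)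
  have h2: "(S1 - S2) * D = fps_const 16 * sW * (2 * fps_X)"
  proof -
    have "(S1 - S2) * D = S1 ^ 2 - S2 ^ 2" unfolding D_def by (simp add: algebra_simps power2_eq_square)
    also have "\<dots> = fps_const 16 * sW * (2 * fps_X)"
      unfolding S1sq S2sq by (simp add: numeral_fps_const algebra_simps)
    finally show ?thesis .
  qed
  have nz: "fps_const 16 * sW \<noteq> 0"
  proof
    assume "fps_const 16 * sW = 0"
    then have "(fps_const 16 * sW) $ 0 = 0" by simp
    then show False using sW0 by simp
  qed
  have "fps_const 16 * sW * (F * D) = fps_const 16 * sW * (2 * fps_X)"
    using h1 h2 by (simp add: mult.assoc[symmetric])
  then have FD: "F * D = 2 * fps_X" using nz by simp
  have "2 * fps_X / D = 2 * fps_X * inverse D" using D0 by (simp add: fps_divide_unit)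
  also have "\<dots> = F * (D * inverse D)" unfolding FD[symmetric] by (simp add: mult.assoc)
  also have "\<dots> = F" using inverse_mult_eq_1'[OF D0] by simp
  finally have "F = 2 * fps_X / D" by simp
  then show ?thesis unfolding F_def D_def S1_def S2_def sW_def .
qed

end
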